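(* Let $k\ge 0$ and let $G$ be a $B_k$-EPG graph on $n$ vertices with clique number $\omega(G)$. Then $G$ has at most $(k+1)(\omega(G)-1)\,n$ edges.
   Context: A graph $G$ is a $B_k$-EPG graph if each vertex $u$ can be assigned a path $P_u$ in the planar orthogonal grid with at most $k$ bends (turns) such that $uv\in E(G)$ if and only if $P_u$ and $P_v$ share at least one grid edge. $\omega(G)$ denotes the maximum size of a clique of $G$. *)

theory Defs
  imports Main
begin

type_synonym gpoint = "int \<times> int"

definition simple_graph :: "'a set \<Rightarrow> ('a \<Rightarrow> 'a \<Rightarrow> bool) \<Rightarrow> bool" where
  "simple_graph V E \<longleftrightarrow> finite V \<and> (\<forall>u v. E u v \<longrightarrow> u \<in> V \<and> v \<in> V)
     \<and> (\<forall>u v. E u v \<longrightarrow> E v u) \<and> (\<forall>u. \<not> E u u)"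

definition graph_edges :: "'a set \<Rightarrow> ('a \<Rightarrow> 'a \<Rightarrow> bool) \<Rightarrow> 'a set set" where
  "graph_edges V E = {{u, v} | u v. u \<in> V \<and> v \<in> V \<and> E u v}"

definition is_clique :: "'a set \<Rightarrow> ('a \<Rightarrow> 'a \<Rightarrow> bool) \<Rightarrow> 'a set \<Rightarrow> bool" where
  "is_clique V E C \<longleftrightarrow> C \<subseteq> V \<and> (\<forall>u\<in>C. \<forall>v\<in>C. u \<noteq> v \<longrightarrow> E u v)"

definition clique_number :: "'a set \<Rightarrow> ('a \<Rightarrow> 'a \<Rightarrow> bool) \<Rightarrow> nat" where
  "clique_number V E = Max {card C | C. is_clique V E C}"

definition grid_adj :: "gpoint \<Rightarrow> gpoint \<Rightarrow> bool" where
  "grid_adj p q \<longleftrightarrow> \<bar>fst p - fst q\<bar> + \<bar>snd p - snd q\<bar> = 1"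

definition grid_path :: "gpoint list \<Rightarrow> bool" where
  "grid_path ps \<longleftrightarrow> ps \<noteq> [] \<and> distinct ps \<and>
     (\<forall>i. Suc i < length ps \<longrightarrow> grid_adj (ps ! i) (ps ! Suc i))"

definition path_grid_edges :: "gpoint list \<Rightarrow> gpoint set set" where
  "path_grid_edges ps = {{ps ! i, ps ! Suc i} | i. Suc i < length ps}"

definition step_dir :: "gpoint \<Rightarrow> gpoint \<Rightarrow> gpoint" where
  "step_dir p q = (fst q - fst p, snd q - snd p)"

definition bends :: "gpoint list \<Rightarrow> nat" where
  "bends ps = card {i. Suc (Suc i) < length ps \<and>
      step_dir (ps ! i) (ps ! Suc i) \<noteq> step_dir (ps ! Suc i) (ps ! Suc (Suc i))}"

definition Bk_EPG_rep :: "nat \<Rightarrow> 'a set \<Rightarrow> ('a \<Rightarrow> 'a \<Rightarrow> bool) \<Rightarrow> ('a \<Rightarrow> gpoint list) \<Rightarrow> bool" where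
  "Bk_EPG_rep k V E P \<longleftrightarrow>
     (\<forall>u\<in>V. grid_path (P u) \<and> bends (P u) \<le> k) \<and>
     (\<forall>u\<in>V. \<forall>v\<in>V. u \<noteq> v \<longrightarrow>
        (E u v \<longleftrightarrow> path_grid_edges (P u) \<inter> path_grid_edges (P v) \<noteq> {}))"

definition Bk_EPG :: "nat \<Rightarrow> 'a set \<Rightarrow> ('a \<Rightarrow> 'a \<Rightarrow> bool) \<Rightarrow> bool" where
  "Bk_EPG k V E \<longleftrightarrow> simple_graph V E \<and> (\<exists>P. Bk_EPG_rep k V E P)"

end

theory Submission
  imports Defs
begin

definition padd :: "gpoint \<Rightarrow> gpoint \<Rightarrow> gpoint" where
  "padd p d = (fst p + fst d, snd p + snd d)"
definition psub :: "gpoint \<Rightarrow> gpoint \<Rightarrow> gpoint" where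
  "psub p d = (fst p - fst d, snd p - snd d)"
definition DD :: "gpoint set" where "DD = {(1,0),(0,1)}"
definition CE :: "gpoint list \<Rightarrow> gpoint set set" where
  "CE ps = {e \<in> path_grid_edges ps. \<exists>p d. d \<in> DD \<and> e = {p, padd p d} \<and> {psub p d, p} \<notin> path_grid_edges ps}"

lemma PGE_image: "path_grid_edges ps = (\<lambda>i. {ps!i, ps!Suc i}) ` {i. Suc i < length ps}"
  by (auto simp: path_grid_edges_def)

lemma finite_PGE: "finite (path_grid_edges ps)"
  unfolding PGE_image by (rule finite_imageI) (rule finite_subset[of _ "{..<length ps}"], auto)

lemma PGE_mem: "Suc i < length ps \<Longrightarrow> {ps!i, ps!Suc i} \<in> path_grid_edges ps"
  by (auto simp: path_grid_edges_def)

lemma adj_form: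
  assumes "grid_adj a b"
  shows "\<exists>p d. d \<in> DD \<and> {a,b} = {p, padd p d}"
proof -
  obtain a1 a2 b1 b2 where ab: "a = (a1,a2)" "b = (b1,b2)" by fastforce
  have h: "\<bar>a1 - b1\<bar> + \<bar>a2 - b2\<bar> = 1" using assms ab by (simp add: grid_adj_def)
  have "(b1 = a1 + 1 \<and> b2 = a2) \<or> (a1 = b1 + 1 \<and> b2 = a2) \<or> (b2 = a2 + 1 \<and> b1 = a1) \<or> (a2 = b2 + 1 \<and> b1 = a1)"
    using h by arith
  then show ?thesis
  proof (elim disjE)
    assume "b1 = a1 + 1 \<and> b2 = a2" then show ?thesis
      by (intro exI[of _ a] exI[of _ "(1,0)"]) (auto simp: DD_def padd_def ab)
  next
    assume "a1 = b1 + 1 \<and> b2 = a2" then show ?thesis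
      by (intro exI[of _ b] exI[of _ "(1,0)"]) (auto simp: DD_def padd_def ab)
  next
    assume "b2 = a2 + 1 \<and> b1 = a1" then show ?thesis
      by (intro exI[of _ a] exI[of _ "(0,1)"]) (auto simp: DD_def padd_def ab)
  next
    assume "a2 = b2 + 1 \<and> b1 = a1" then show ?thesis
      by (intro exI[of _ b] exI[of _ "(0,1)"]) (auto simp: DD_def padd_def ab)
  qed
qed

lemma walk_back:
  assumes "{p, padd p d} \<in> A" "{p, padd p d} \<in> B" "finite A" "d \<in> DD"
  shows "\<exists>q. {q, padd q d} \<in> A \<and> {q, padd q d} \<in> B \<and> ({psub q d, q} \<notin> A \<or> {psub q d, q} \<notin> B)"
proof (rule ccontr)
  assume H: "\<not> ?thesis"
  define f where "f j = (fst p - int j * fst d, snd p - int j * snd d)" for j :: nat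
  define ed where "ed j = {f j, padd (f j) d}" for j
  have f1: "padd (f (Suc j)) d = f j" for j by (simp add: f_def padd_def algebra_simps)
  have f2: "psub (f j) d = f (Suc j)" for j by (simp add: f_def psub_def algebra_simps)
  have all: "ed j \<in> A \<and> ed j \<in> B" for j
  proof (induction j)
    case 0 then show ?case using assms by (simp add: ed_def f_def)
  next
    case (Suc j)
    then have "{psub (f j) d, f j} \<in> A \<and> {psub (f j) d, f j} \<in> B" using H unfolding ed_def by blast
    then show ?case unfolding ed_def f2 f1 by simp
  qed
  have "inj ed"
  proof (rule injI)
    fix x y assume "ed x = ed y"
    then have "f x \<in> ed y" "f y \<in> ed x" unfolding ed_def by auto
    then have m1: "f x \<in> ed y" and m2: "f y \<in> ed x" .
    from assms(4) have "d = (1,0) \<or> d = (0,1)" by (simp add: DD_def)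
    then show "x = y"
    proof
      assume d: "d = (1,0)"
      have "int x = int y \<or> int x + 1 = int y" using m1 by (simp add: ed_def f_def padd_def d) linarith
      moreover have "int y = int x \<or> int y + 1 = int x" using m2 by (simp add: ed_def f_def padd_def d) linarith
      ultimately show ?thesis by linarith
    next
      assume d: "d = (0,1)"
      have "int x = int y \<or> int x + 1 = int y" using m1 by (simp add: ed_def f_def padd_def d) linarith
      moreover have "int y = int x \<or> int y + 1 = int x" using m2 by (simp add: ed_def f_def padd_def d) linarith
      ultimately show ?thesis by linarith
    qed
  qed
  moreover have "range ed \<subseteq> A" using all by auto
  then have "finite (range ed)" using assms(3) finite_subset by blast
  ultimately have "finite (UNIV :: nat set)" using finite_imageD by blast
  then show False by simp
qed

lemma CE_card:
  assumes gp: "grid_path ps"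
  shows "card (CE ps) \<le> bends ps + 1"
proof -
  define n where "n = length ps"
  define sd where "sd i = step_dir (ps!i) (ps!Suc i)" for i
  define Bs where "Bs = {i. Suc (Suc i) < n \<and> sd i \<noteq> sd (Suc i)}"
  have bends: "bends ps = card Bs" by (simp add: bends_def Bs_def sd_def n_def)
  have finB: "finite Bs" by (rule finite_subset[of _ "{..<n}"]) (auto simp: Bs_def)
  define I where "I = {i. Suc i < n \<and> {ps!i, ps!Suc i} \<in> CE ps}"
  define \<sigma> where "\<sigma> i = card {b\<in>Bs. b < i}" for i
  have CEI: "CE ps \<subseteq> (\<lambda>i. {ps!i, ps!Suc i}) ` I"
  proof
    fix e assume eC: "e \<in> CE ps"
    have "e \<in> path_grid_edges ps" using eC unfolding CE_def mem_Collect_eq by (rule conjunct1)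
    then have "\<exists>i. e = {ps!i, ps!Suc i} \<and> Suc i < length ps"
      unfolding path_grid_edges_def mem_Collect_eq .
    then obtain i where "e = {ps!i, ps!Suc i} \<and> Suc i < length ps" ..
    then have i1: "Suc i < n" and i2: "e = {ps!i, ps!Suc i}" by (simp_all add: n_def)
    have "i \<in> I" unfolding I_def using i1 eC i2 by (intro CollectI conjI) simp_all
    then show "e \<in> (\<lambda>i. {ps!i, ps!Suc i}) ` I" using i2 by (rule rev_image_eqI)
  qed
  have finI: "finite I" by (rule finite_subset[of _ "{..<n}"]) (auto simp: I_def)
  have nxt: "ps!Suc i = padd (ps!i) (sd i)" for i by (auto simp: sd_def padd_def step_dir_def)
  have claim: "False" if iI: "i \<in> I" and jI: "j \<in> I" and ij: "i < j" and eq: "\<sigma> i = \<sigma> j" for i j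
  proof -
    have sub: "{b\<in>Bs. b<i} \<subseteq> {b\<in>Bs. b<j}" using ij by auto
    have eqset: "{b\<in>Bs. b<i} = {b\<in>Bs. b<j}"
    proof (rule card_subset_eq[OF _ sub])
      show "finite {b\<in>Bs. b<j}" using finB by simp
      show "card {b\<in>Bs. b<i} = card {b\<in>Bs. b<j}" using eq by (simp only: \<sigma>_def)
    qed
    have noB: "m \<notin> Bs" if "i \<le> m" "m < j" for m
    proof
      assume "m \<in> Bs"
      then have "m \<in> {b\<in>Bs. b<j}" using that by simp
      then have "m \<in> {b\<in>Bs. b<i}" by (simp only: eqset)
      then show False using that by simp
    qed
    have jn: "Suc j < n" using jI unfolding I_def mem_Collect_eq by (rule conjunct1)
    have const: "m \<le> j \<Longrightarrow> i \<le> m \<Longrightarrow> sd m = sd i" for m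
    proof (induction m)
      case 0 then show ?case by simp
    next
      case (Suc m)
      show ?case
      proof (cases "i = Suc m")
        case True then show ?thesis by simp
      next
        case False
        then have "i \<le> m" "m < j" using Suc.prems by auto
        then have "m \<notin> Bs" by (rule noB)
        moreover have "Suc (Suc m) < n" using Suc.prems jn by auto
        ultimately have "sd (Suc m) = sd m" by (auto simp: Bs_def)
        then show ?thesis using Suc.IH \<open>i \<le> m\<close> \<open>m < j\<close> by simp
      qed
    qed
    have iCE: "{ps!i, ps!Suc i} \<in> CE ps" using iI unfolding I_def mem_Collect_eq by (rule conjunct2)
    then have "\<exists>p d. d \<in> DD \<and> {ps!i, ps!Suc i} = {p, padd p d} \<and> {psub p d, p} \<notin> path_grid_edges ps"
      unfolding CE_def mem_Collect_eq by (rule conjunct2)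
    then obtain p d where d: "d \<in> DD" and e: "{ps!i, ps!Suc i} = {p, padd p d}"
        and np: "{psub p d, p} \<notin> path_grid_edges ps" by blast
    from e have "(ps!i = p \<and> ps!Suc i = padd p d) \<or> (ps!i = padd p d \<and> ps!Suc i = p)"
      by (simp add: doubleton_eq_iff)
    then show False
    proof
      assume A: "ps!i = p \<and> ps!Suc i = padd p d"
      then have sdi: "sd i = d" using nxt[of i] by (auto simp: padd_def prod_eq_iff)
      have jCE: "{ps!j, ps!Suc j} \<in> CE ps" using jI unfolding I_def mem_Collect_eq by (rule conjunct2)
      then have "\<exists>p d. d \<in> DD \<and> {ps!j, ps!Suc j} = {p, padd p d} \<and> {psub p d, p} \<notin> path_grid_edges ps"
        unfolding CE_def mem_Collect_eq by (rule conjunct2)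
      then obtain p' d' where d': "d' \<in> DD" and e': "{ps!j, ps!Suc j} = {p', padd p' d'}"
        and np': "{psub p' d', p'} \<notin> path_grid_edges ps" by blast
      have sdj: "sd j = d" using const[of j] ij sdi by simp
      from e' have "(ps!j = p' \<and> ps!Suc j = padd p' d') \<or> (ps!j = padd p' d' \<and> ps!Suc j = p')"
        by (simp add: doubleton_eq_iff)
      then show False
      proof
        assume A1: "ps!j = p' \<and> ps!Suc j = padd p' d'"
        then have "d' = d" using nxt[of j] sdj by (auto simp: padd_def prod_eq_iff)
        have j1: "Suc (j - 1) = j" using ij by simp
        have "sd (j - 1) = d" using const[of "j - 1"] ij sdi by simp
        then have "ps ! j = padd (ps!(j-1)) d" using nxt[of "j-1"] j1 by simp
        then have "psub p' d' = ps!(j-1)" using A1 \<open>d' = d\<close> by (auto simp: padd_def psub_def prod_eq_iff)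
        moreover have "{ps!(j-1), ps!Suc (j-1)} \<in> path_grid_edges ps"
          by (rule PGE_mem) (use j1 jn in \<open>simp add: n_def\<close>)
        ultimately show False using np' A1 j1 by simp
      next
        assume A2: "ps!j = padd p' d' \<and> ps!Suc j = p'"
        have "ps!Suc j = padd (ps!j) d" using nxt[of j] sdj by simp
        then have "padd (padd p' d') d = p'" using A2 by metis
        then show False using d d' by (auto simp: DD_def padd_def prod_eq_iff)
      qed
    next
      assume B: "ps!i = padd p d \<and> ps!Suc i = p"
      have sdi: "sd (Suc i) = sd i" using const[of "Suc i"] ij by simp
      have "ps!Suc (Suc i) = psub p d"
        using nxt[of i] nxt[of "Suc i"] B sdi by (auto simp: padd_def psub_def prod_eq_iff)
      moreover have "{ps!Suc i, ps!Suc (Suc i)} \<in> path_grid_edges ps"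
        by (rule PGE_mem) (use ij jn in \<open>simp add: n_def\<close>)
      ultimately show False using np B by (simp add: insert_commute)
    qed
  qed
  have inj: "inj_on \<sigma> I"
  proof (rule inj_onI)
    fix i j assume "i \<in> I" "j \<in> I" "\<sigma> i = \<sigma> j"
    then show "i = j" using claim[of i j] claim[of j i] by (cases i j rule: linorder_cases) auto
  qed
  have img: "\<sigma> ` I \<subseteq> {..card Bs}"
    using finB by (auto simp: \<sigma>_def intro: card_mono)
  have "card (CE ps) \<le> card ((\<lambda>i. {ps!i, ps!Suc i}) ` I)"
    by (rule card_mono[OF _ CEI]) (simp add: finI)
  also have "\<dots> \<le> card I" by (rule card_image_le[OF finI])
  also have "\<dots> \<le> card {..card Bs}" by (rule card_inj_on_le[OF inj img]) simp
  finally show ?thesis by (simp add: bends)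
qed

theorem lemma12:
  fixes k :: nat and V :: "'a set" and E :: "'a \<Rightarrow> 'a \<Rightarrow> bool"
  assumes "Bk_EPG k V E"
  shows "card (graph_edges V E) \<le> (k + 1) * (clique_number V E - 1) * card V"
proof -
  from assms obtain P where sg: "simple_graph V E" and rep: "Bk_EPG_rep k V E P"
    by (auto simp: Bk_EPG_def)
  have finV: "finite V" using sg by (simp add: simple_graph_def)
  have irr: "\<not> E u u" for u using sg by (simp add: simple_graph_def)
  have gp: "grid_path (P u)" "bends (P u) \<le> k" if "u \<in> V" for u
    using rep that by (auto simp: Bk_EPG_rep_def)
  have adjE: "E u v \<longleftrightarrow> path_grid_edges (P u) \<inter> path_grid_edges (P v) \<noteq> {}"
    if "u \<in> V" "v \<in> V" "u \<noteq> v" for u v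
    using rep that by (auto simp: Bk_EPG_rep_def)
  define \<omega> where "\<omega> = clique_number V E"
  have cl_le: "card C \<le> \<omega>" if "is_clique V E C" for C
  proof -
    have "{card C | C. is_clique V E C} \<subseteq> card ` Pow V" by (auto simp: is_clique_def)
    then have "finite {card C | C. is_clique V E C}" using finV finite_subset by blast
    then show ?thesis unfolding \<omega>_def clique_number_def using that by (auto intro: Max_ge)
  qed
  define X where "X w f = {x\<in>V. x \<noteq> w \<and> f \<in> path_grid_edges (P x)}" for w f
  have finX: "finite (X w f)" for w f using finV by (simp add: X_def)
  have Xle: "card (X w f) \<le> \<omega> - 1" if wV: "w \<in> V" and fC: "f \<in> CE (P w)" for w f
  proof -
    have fw: "f \<in> path_grid_edges (P w)" using fC unfolding CE_def mem_Collect_eq by (rule conjunct1)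
    have "is_clique V E (insert w (X w f))"
      unfolding is_clique_def
    proof (intro conjI ballI impI)
      show "insert w (X w f) \<subseteq> V" using wV by (auto simp: X_def)
    next
      fix u v assume u: "u \<in> insert w (X w f)" and v: "v \<in> insert w (X w f)" and uv: "u \<noteq> v"
      have "u \<in> V" "f \<in> path_grid_edges (P u)" using u wV fw by (auto simp: X_def)
      moreover have "v \<in> V" "f \<in> path_grid_edges (P v)" using v wV fw by (auto simp: X_def)
      ultimately show "E u v" using adjE[of u v] uv by blast
    qed
    then have "card (insert w (X w f)) \<le> \<omega>" by (rule cl_le)
    moreover have "w \<notin> X w f" by (simp add: X_def)
    ultimately show ?thesis using finX[of w f] by simp
  qed
  have sub: "graph_edges V E \<subseteq> (\<Union>w\<in>V. \<Union>f\<in>CE (P w). (\<lambda>x. {w,x}) ` X w f)"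
  proof
    fix e assume "e \<in> graph_edges V E"
    then obtain u v where uv: "e = {u,v}" "u \<in> V" "v \<in> V" "E u v" by (auto simp: graph_edges_def)
    have "u \<noteq> v" using irr uv by auto
    then have "path_grid_edges (P u) \<inter> path_grid_edges (P v) \<noteq> {}" using adjE uv by blast
    then obtain g where g1: "g \<in> path_grid_edges (P u)" and g2: "g \<in> path_grid_edges (P v)" by blast
    from g1 obtain i where i: "Suc i < length (P u)" "g = {P u!i, P u!Suc i}"
      unfolding path_grid_edges_def by blast
    have "grid_adj (P u!i) (P u!Suc i)" using gp(1)[OF uv(2)] i by (simp add: grid_path_def)
    then obtain p d where d: "d \<in> DD" and pd: "g = {p, padd p d}" using adj_form i by metis
    obtain q where q1: "{q, padd q d} \<in> path_grid_edges (P u)" and q2: "{q, padd q d} \<in> path_grid_edges (P v)"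
      and q3: "{psub q d, q} \<notin> path_grid_edges (P u) \<or> {psub q d, q} \<notin> path_grid_edges (P v)"
      using walk_back[of p d "path_grid_edges (P u)" "path_grid_edges (P v)"] g1 g2 pd d finite_PGE by blast
    from q3 show "e \<in> (\<Union>w\<in>V. \<Union>f\<in>CE (P w). (\<lambda>x. {w,x}) ` X w f)"
    proof
      assume "{psub q d, q} \<notin> path_grid_edges (P u)"
      then have "{q, padd q d} \<in> CE (P u)" using q1 d unfolding CE_def mem_Collect_eq
        by (intro conjI exI[of _ q] exI[of _ d]) simp_all
      moreover have "v \<in> X u {q, padd q d}" using q2 uv \<open>u \<noteq> v\<close> by (auto simp: X_def)
      ultimately show ?thesis using uv by blast
    next
      assume "{psub q d, q} \<notin> path_grid_edges (P v)"
      then have "{q, padd q d} \<in> CE (P v)" using q2 d unfolding CE_def mem_Collect_eq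
        by (intro conjI exI[of _ q] exI[of _ d]) simp_all
      moreover have "u \<in> X v {q, padd q d}" using q1 uv \<open>u \<noteq> v\<close> by (auto simp: X_def)
      ultimately show ?thesis using uv by (blast intro: insert_commute)
    qed
  qed
  have finCE: "finite (CE ps)" for ps
    by (rule finite_subset[OF _ finite_PGE[of ps]]) (unfold CE_def, rule Collect_subset)
  have "card (graph_edges V E) \<le> card (\<Union>w\<in>V. \<Union>f\<in>CE (P w). (\<lambda>x. {w,x}) ` X w f)"
    by (rule card_mono[OF _ sub]) (simp add: finV finCE finX)
  also have "\<dots> \<le> (\<Sum>w\<in>V. card (\<Union>f\<in>CE (P w). (\<lambda>x. {w,x}) ` X w f))"
    by (rule card_UN_le[OF finV])
  also have "\<dots> \<le> (\<Sum>w\<in>V. (k + 1) * (\<omega> - 1))"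
  proof (rule sum_mono)
    fix w assume wV: "w \<in> V"
    have "card (\<Union>f\<in>CE (P w). (\<lambda>x. {w,x}) ` X w f) \<le> (\<Sum>f\<in>CE (P w). card ((\<lambda>x. {w,x}) ` X w f))"
      by (rule card_UN_le[OF finCE])
    also have "\<dots> \<le> (\<Sum>f\<in>CE (P w). \<omega> - 1)"
    proof (rule sum_mono)
      fix f assume "f \<in> CE (P w)"
      then show "card ((\<lambda>x. {w,x}) ` X w f) \<le> \<omega> - 1"
        using card_image_le[OF finX, of "\<lambda>x. {w,x}" w f] Xle[OF wV] by fastforce
    qed
    also have "\<dots> = card (CE (P w)) * (\<omega> - 1)" by simp
    also have "\<dots> \<le> (k + 1) * (\<omega> - 1)"
      using CE_card[OF gp(1)[OF wV]] gp(2)[OF wV] by (intro mult_right_mono) auto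
    finally show "card (\<Union>f\<in>CE (P w). (\<lambda>x. {w,x}) ` X w f) \<le> (k + 1) * (\<omega> - 1)" .
  qed
  also have "\<dots> = (k + 1) * (\<omega> - 1) * card V" by simp
  finally show ?thesis unfolding \<omega>_def .
qed

end
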